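(* Let $N\ge 1$, $m\ge1$ and $m_1,\dots,m_N\ge 1$ be integers. For $t=1,\dots,N$ let $D^{(t)}\in\mathbb{R}^{m\times m_t}$ be given matrices, and let $\bm{a}^{(t)}\in\mathbb{R}^{m_t}$ satisfy $\bm{a}^{(t)}\ge 0$ and $\bm{e}_{m_t}^\top\bm{a}^{(t)}=1$. Consider the primal problem $$(\mathrm{P})\quad \min_{\bm{w}\in\mathbb{R}^m,\,\Pi^{(t)}\in\mathbb{R}^{m\times m_t}}\ \delta_{\Delta_m}(\bm{w})+\sum_{t=1}^N\delta^t_+(\Pi^{(t)})+\sum_{t=1}^N\langle D^{(t)},\Pi^{(t)}\rangle\quad\text{s.t.}\quad \Pi^{(t)}\bm{e}_{m_t}=\bm{w},\ (\Pi^{(t)})^\top\bm{e}_m=\bm{a}^{(t)},\ t=1,\dots,N,$$ and the dual-type problem $$(\mathrm{D})\quad \min_{\bm{u}\in\mathbb{R}^m,\,V^{(t)}\in\mathbb{R}^{m\times m_t},\,\bm{y}^{(t)}\in\mathbb{R}^m,\,\bm{z}^{(t)}\in\mathbb{R}^{m_t}}\ \delta^*_{\Delta_m}(\bm{u})+\sum_{t=1}^N\delta^t_+(V^{(t)})+\sum_{t=1}^N\langle\bm{z}^{(t)},\bm{a}^{(t)}\rangle$$ $$\text{s.t.}\quad \sum_{t=1}^N\bm{y}^{(t)}-\bm{u}=0,\qquad V^{(t)}-D^{(t)}-\bm{y}^{(t)}\bm{e}_{m_t}^\top-\bm{e}_m(\bm{z}^{(t)})^\top=0,\ t=1,\dots,N.$$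 Consider the KKT system for (P) in the unknowns $(\bm{w},\{\Pi^{(t)}\},\{\bm{y}^{(t)}\},\{\bm{z}^{(t)}\})$: $$0\in\partial\delta_{\Delta_m}(\bm{w})-\sum_{t=1}^N\bm{y}^{(t)},\quad 0\in\partial\delta^t_+(\Pi^{(t)})+D^{(t)}+\bm{y}^{(t)}\bm{e}_{m_t}^\top+\bm{e}_m(\bm{z}^{(t)})^\top,\quad \Pi^{(t)}\bm{e}_{m_t}=\bm{w},\quad (\Pi^{(t)})^\top\bm{e}_m=\bm{a}^{(t)}\quad(\forall t),$$ and the KKT system for (D) in the unknowns $(\bm{u},\{V^{(t)}\},\{\bm{y}^{(t)}\},\{\bm{z}^{(t)}\},\bm{\lambda},\{\Lambda^{(t)}\})$ with $\bm{\lambda}\in\mathbb{R}^m$, $\Lambda^{(t)}\in\mathbb{R}^{m\times m_t}$: $$0\in\partial\delta^*_{\Delta_m}(\bm{u})-\bm{\lambda},\quad 0\in\partial\delta^t_+(V^{(t)})+\Lambda^{(t)},\quad \Lambda^{(t)}\bm{e}_{m_t}=\bm{\lambda},\quad (\Lambda^{(t)})^\top\bm{e}_m=\bm{a}^{(t)},$$ $$\sum_{t=1}^N\bm{y}^{(t)}-\bm{u}=0,\quad V^{(t)}-D^{(t)}-\bm{y}^{(t)}\bm{e}_{m_t}^\top-\bm{e}_m(\bm{z}^{(t)})^\top=0\quad(\forall t).$$ Then: (i) (P) has an optimal solution and the solution set of the KKT system for (P) is nonempty; (ii) (D) has an optimal solution and the solution set of the KKT system for (D) is nonempty; (iii) if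 $(\bm{u}^*,\{V^{(t),*}\},\{\bm{y}^{(t),*}\},\{\bm{z}^{(t),*}\},\bm{\lambda}^*,\{\Lambda^{(t),*}\})$ solves the KKT system for (D), then $(\bm{u}^*,\{V^{(t),*}\},\{\bm{y}^{(t),*}\},\{\bm{z}^{(t),*}\})$ is an optimal solution of (D) and $(\bm{\lambda}^*,\{\Lambda^{(t),*}\})$ (as $(\bm{w},\{\Pi^{(t)}\})$) is an optimal solution of (P).
   Context: $\bm{e}_k$ denotes the all-ones vector in $\mathbb{R}^k$. $\Delta_m=\{\bm{w}\in\mathbb{R}^m:\bm{e}_m^\top\bm{w}=1,\ \bm{w}\ge0\}$ is the unit simplex; $\delta_{\Delta_m}$ is its indicator function (0 on $\Delta_m$, $+\infty$ outside) and $\delta^*_{\Delta_m}$ its convex conjugate, $\delta^*_{\Delta_m}(\bm{u})=\max_i u_i$. $\delta^t_+$ is the indicator function of the nonnegative orthant $\{\Pi\in\mathbb{R}^{m\times m_t}:\Pi\ge0\}$ (entrywise). $\partial$ denotes the convex subdifferential and $\langle X,Y\rangle=\sum_{ij}x_{ij}y_{ij}$. *)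

theory Defs
  imports Complex_Main "HOL-Library.Extended_Real"
begin

text \<open>Vectors in R^m are represented as functions nat => real vanishing outside {..<m};
  m x n matrices as functions nat => nat => real vanishing outside {..<m} x {..<n}.
  Indices are 0-based: t ranges over {..<N}.\<close>

definition vecs :: "nat \<Rightarrow> (nat \<Rightarrow> real) set" where
  "vecs m = {v. \<forall>i. m \<le> i \<longrightarrow> v i = 0}"

definition mats :: "nat \<Rightarrow> nat \<Rightarrow> (nat \<Rightarrow> nat \<Rightarrow> real) set" where
  "mats m n = {A. \<forall>i j. (m \<le> i \<or> n \<le> j) \<longrightarrow> A i j = 0}"

definition vinner :: "nat \<Rightarrow> (nat \<Rightarrow> real) \<Rightarrow> (nat \<Rightarrow> real) \<Rightarrow> real" where
  "vinner m u v = (\<Sum>i<m. u i * v i)"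

definition minner :: "nat \<Rightarrow> nat \<Rightarrow> (nat \<Rightarrow> nat \<Rightarrow> real) \<Rightarrow> (nat \<Rightarrow> nat \<Rightarrow> real) \<Rightarrow> real" where
  "minner m n A B = (\<Sum>i<m. \<Sum>j<n. A i j * B i j)"

definition vsubdiff :: "nat \<Rightarrow> ((nat \<Rightarrow> real) \<Rightarrow> ereal) \<Rightarrow> (nat \<Rightarrow> real) \<Rightarrow> (nat \<Rightarrow> real) set" where
  "vsubdiff m f x = {g \<in> vecs m. x \<in> vecs m \<and> f x \<noteq> \<infinity> \<and> f x \<noteq> -\<infinity> \<and>
      (\<forall>y\<in>vecs m. f x + ereal (vinner m g (\<lambda>i. y i - x i)) \<le> f y)}"

definition msubdiff :: "nat \<Rightarrow> nat \<Rightarrow> ((nat \<Rightarrow> nat \<Rightarrow> real) \<Rightarrow> ereal) \<Rightarrow> (nat \<Rightarrow> nat \<Rightarrow> real)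
      \<Rightarrow> (nat \<Rightarrow> nat \<Rightarrow> real) set" where
  "msubdiff m n f X = {G \<in> mats m n. X \<in> mats m n \<and> f X \<noteq> \<infinity> \<and> f X \<noteq> -\<infinity> \<and>
      (\<forall>Y\<in>mats m n. f X + ereal (minner m n G (\<lambda>i j. Y i j - X i j)) \<le> f Y)}"

definition vconj :: "nat \<Rightarrow> ((nat \<Rightarrow> real) \<Rightarrow> ereal) \<Rightarrow> (nat \<Rightarrow> real) \<Rightarrow> ereal" where
  "vconj m f u = (SUP x\<in>vecs m. ereal (vinner m u x) - f x)"

definition simplex :: "nat \<Rightarrow> (nat \<Rightarrow> real) set" where
  "simplex m = {w \<in> vecs m. (\<Sum>i<m. w i) = 1 \<and> (\<forall>i<m. 0 \<le> w i)}"

definition delta_simplex :: "nat \<Rightarrow> (nat \<Rightarrow> real) \<Rightarrow> ereal" where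
  "delta_simplex m w = (if w \<in> simplex m then 0 else \<infinity>)"

definition nonneg_mats :: "nat \<Rightarrow> nat \<Rightarrow> (nat \<Rightarrow> nat \<Rightarrow> real) set" where
  "nonneg_mats m n = {X \<in> mats m n. \<forall>i<m. \<forall>j<n. 0 \<le> X i j}"

definition delta_plus :: "nat \<Rightarrow> nat \<Rightarrow> (nat \<Rightarrow> nat \<Rightarrow> real) \<Rightarrow> ereal" where
  "delta_plus m n X = (if X \<in> nonneg_mats m n then 0 else \<infinity>)"

definition P_feasible where
  "P_feasible N m mt a w Pi \<longleftrightarrow> w \<in> vecs m \<and>
     (\<forall>t<N. Pi t \<in> mats m (mt t) \<and>
        (\<forall>i<m. (\<Sum>j<mt t. Pi t i j) = w i) \<and>
        (\<forall>j<mt t. (\<Sum>i<m. Pi t i j) = a t j))"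

definition P_obj :: "nat \<Rightarrow> nat \<Rightarrow> (nat \<Rightarrow> nat) \<Rightarrow> (nat \<Rightarrow> nat \<Rightarrow> nat \<Rightarrow> real)
     \<Rightarrow> (nat \<Rightarrow> real) \<Rightarrow> (nat \<Rightarrow> nat \<Rightarrow> nat \<Rightarrow> real) \<Rightarrow> ereal" where
  "P_obj N m mt D w Pi = delta_simplex m w + (\<Sum>t<N. delta_plus m (mt t) (Pi t))
      + ereal (\<Sum>t<N. minner m (mt t) (D t) (Pi t))"

definition P_optimal where
  "P_optimal N m mt D a w Pi \<longleftrightarrow> P_feasible N m mt a w Pi \<and>
     (\<forall>w' Pi'. P_feasible N m mt a w' Pi' \<longrightarrow> P_obj N m mt D w Pi \<le> P_obj N m mt D w' Pi')"

definition D_feasible where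
  "D_feasible N m mt D u V y z \<longleftrightarrow> u \<in> vecs m \<and>
     (\<forall>t<N. V t \<in> mats m (mt t) \<and> y t \<in> vecs m \<and> z t \<in> vecs (mt t)) \<and>
     (\<forall>i<m. (\<Sum>t<N. y t i) - u i = 0) \<and>
     (\<forall>t<N. \<forall>i<m. \<forall>j<mt t. V t i j - D t i j - y t i - z t j = 0)"

definition D_obj :: "nat \<Rightarrow> nat \<Rightarrow> (nat \<Rightarrow> nat) \<Rightarrow> (nat \<Rightarrow> nat \<Rightarrow> real) \<Rightarrow> (nat \<Rightarrow> real)
     \<Rightarrow> (nat \<Rightarrow> nat \<Rightarrow> nat \<Rightarrow> real) \<Rightarrow> (nat \<Rightarrow> nat \<Rightarrow> real) \<Rightarrow> ereal" where
  "D_obj N m mt a u V z = vconj m (delta_simplex m) u + (\<Sum>t<N. delta_plus m (mt t) (V t))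
      + ereal (\<Sum>t<N. vinner (mt t) (z t) (a t))"

definition D_optimal where
  "D_optimal N m mt D a u V y z \<longleftrightarrow> D_feasible N m mt D u V y z \<and>
     (\<forall>u' V' y' z'. D_feasible N m mt D u' V' y' z' \<longrightarrow>
        D_obj N m mt a u V z \<le> D_obj N m mt a u' V' z')"

definition KKT_P where
  "KKT_P N m mt D a w Pi y z \<longleftrightarrow> w \<in> vecs m \<and>
     (\<forall>t<N. Pi t \<in> mats m (mt t) \<and> y t \<in> vecs m \<and> z t \<in> vecs (mt t)) \<and>
     (\<lambda>i. \<Sum>t<N. y t i) \<in> vsubdiff m (delta_simplex m) w \<and>
     (\<forall>t<N. (\<lambda>i j. if i < m \<and> j < mt t then - (D t i j + y t i + z t j) else 0)
              \<in> msubdiff m (mt t) (delta_plus m (mt t)) (Pi t)) \<and>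
     (\<forall>t<N. (\<forall>i<m. (\<Sum>j<mt t. Pi t i j) = w i) \<and> (\<forall>j<mt t. (\<Sum>i<m. Pi t i j) = a t j))"

definition KKT_D where
  "KKT_D N m mt D a u V y z lam Lam \<longleftrightarrow> u \<in> vecs m \<and> lam \<in> vecs m \<and>
     (\<forall>t<N. V t \<in> mats m (mt t) \<and> y t \<in> vecs m \<and> z t \<in> vecs (mt t) \<and> Lam t \<in> mats m (mt t)) \<and>
     lam \<in> vsubdiff m (vconj m (delta_simplex m)) u \<and>
     (\<forall>t<N. (\<lambda>i j. - Lam t i j) \<in> msubdiff m (mt t) (delta_plus m (mt t)) (V t)) \<and>
     (\<forall>t<N. (\<forall>i<m. (\<Sum>j<mt t. Lam t i j) = lam i) \<and> (\<forall>j<mt t. (\<Sum>i<m. Lam t i j) = a t j)) \<and>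
     (\<forall>i<m. (\<Sum>t<N. y t i) - u i = 0) \<and>
     (\<forall>t<N. \<forall>i<m. \<forall>j<mt t. V t i j - D t i j - y t i - z t j = 0)"

end

theory Submission
  imports Defs
begin


definition sat :: "'v set \<Rightarrow> ('v \<Rightarrow> real) \<Rightarrow> ('v \<Rightarrow> real) \<times> real \<Rightarrow> bool" where
  "sat V x s \<longleftrightarrow> (\<Sum>v\<in>V. fst s v * x v) \<le> snd s"

inductive_set cone :: "(('v \<Rightarrow> real) \<times> real) set \<Rightarrow> (('v \<Rightarrow> real) \<times> real) set" for S where
  czero: "(\<lambda>_. 0, 0) \<in> cone S"
| cbase: "s \<in> S \<Longrightarrow> s \<in> cone S"
| cadd: "p \<in> cone S \<Longrightarrow> q \<in> cone S \<Longrightarrow> (\<lambda>v. fst p v + fst q v, snd p + snd q) \<in> cone S"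
| cscale: "p \<in> cone S \<Longrightarrow> 0 \<le> a \<Longrightarrow> (\<lambda>v. a * fst p v, a * snd p) \<in> cone S"

lemma cone_sub: "p \<in> cone S' \<Longrightarrow> S' \<subseteq> cone S \<Longrightarrow> p \<in> cone S"
  by (induction p rule: cone.induct) (auto intro: cone.intros)

lemma cone_zero_coord: "p \<in> cone S \<Longrightarrow> \<forall>s\<in>S. fst s v = 0 \<Longrightarrow> fst p v = 0"
  by (induction p rule: cone.induct) auto

definition comb :: "'v \<Rightarrow> ('v \<Rightarrow> real) \<times> real \<Rightarrow> ('v \<Rightarrow> real) \<times> real \<Rightarrow> ('v \<Rightarrow> real) \<times> real" where
  "comb v p q = (\<lambda>u. fst (\<lambda>u. (- fst q v) * fst p u, (- fst q v) * snd p) u + fst (\<lambda>u. fst p v * fst q u, fst p v * snd q) u,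
                 snd (\<lambda>u. (- fst q v) * fst p u, (- fst q v) * snd p) + snd (\<lambda>u. fst p v * fst q u, fst p v * snd q))"

lemma farkas:
  fixes V :: "'v set" and S :: "(('v \<Rightarrow> real) \<times> real) set"
  assumes "finite V"
  shows "finite S \<Longrightarrow> \<not>(\<exists>x. \<forall>s\<in>S. sat V x s) \<Longrightarrow> \<exists>p\<in>cone S. (\<forall>v\<in>V. fst p v = 0) \<and> snd p < 0"
  using assms
proof (induction V arbitrary: S rule: finite_induct)
  case empty
  then obtain s where "s \<in> S" "\<not> 0 \<le> snd s" by (auto simp: sat_def)
  then show ?case by (intro bexI[of _ s]) (auto intro: cone.intros)
next
  case (insert v V)
  define P where "P = {s\<in>S. fst s v > 0}"
  define M where "M = {s\<in>S. fst s v < 0}"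
  define Z where "Z = {s\<in>S. fst s v = 0}"
  define S' where "S' = Z \<union> (\<lambda>(p,q). comb v p q) ` (P \<times> M)"
  have fin: "finite P" "finite M" "finite Z" using insert.prems(1) by (auto simp: P_def M_def Z_def)
  have "finite S'" using fin by (simp add: S'_def)
  have inf': "\<not>(\<exists>x. \<forall>s\<in>S'. sat V x s)"
  proof
    assume "\<exists>x. \<forall>s\<in>S'. sat V x s"
    then obtain x where x: "\<forall>s\<in>S'. sat V x s" by blast
    define r where "r s = (\<Sum>u\<in>V. fst s u * x u)" for s :: "('v \<Rightarrow> real) \<times> real"
    define up where "up p = (snd p - r p) / fst p v" for p :: "('v \<Rightarrow> real) \<times> real"
    define lo where "lo q = (snd q - r q) / fst q v" for q :: "('v \<Rightarrow> real) \<times> real"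
    have lu: "lo q \<le> up p" if "p \<in> P" "q \<in> M" for p q
    proof -
      have "sat V x (comb v p q)" using x that by (auto simp: S'_def)
      then have "(\<Sum>u\<in>V. ((- fst q v) * fst p u + fst p v * fst q u) * x u) \<le> (- fst q v) * snd p + fst p v * snd q"
        by (simp add: sat_def comb_def)
      also have "(\<Sum>u\<in>V. ((- fst q v) * fst p u + fst p v * fst q u) * x u) = (- fst q v) * r p + fst p v * r q"
        unfolding r_def sum_distrib_left sum.distrib[symmetric] by (rule sum.cong) (auto simp: algebra_simps)
      finally have h: "(- fst q v) * r p + fst p v * r q \<le> (- fst q v) * snd p + fst p v * snd q" .
      have pv: "fst p v > 0" and qv: "fst q v < 0" using that by (auto simp: P_def M_def)
      have "fst p v * (r q - snd q) \<le> (- fst q v) * (snd p - r p)" using h by (simp add: algebra_simps)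
      then have "(r q - snd q) / (- fst q v) \<le> (snd p - r p) / fst p v"
        using pv qv by (simp add: divide_simps mult.commute)
      then show ?thesis unfolding lo_def up_def using qv
        by (smt (verit) minus_divide_divide divide_minus_left)
    qed
    define t where "t = (if M = {} then Min (insert 0 (up ` P)) else Max (lo ` M))"
    have tP: "t \<le> up p" if "p \<in> P" for p
    proof (cases "M = {}")
      case True then show ?thesis using that fin by (auto simp: t_def)
    next
      case False
      then show ?thesis using fin lu that by (auto simp: t_def)
    qed
    have tM: "lo q \<le> t" if "q \<in> M" for q
      using that fin by (auto simp: t_def)
    define x' where "x' = x(v := t)"
    have "sat (insert v V) x' s" if "s \<in> S" for s
    proof -
      have eq: "(\<Sum>u\<in>insert v V. fst s u * x' u) = fst s v * t + r s"
        using insert.hyps by (simp add: x'_def r_def) (rule sum.cong, auto)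
      have "fst s v > 0 \<or> fst s v < 0 \<or> fst s v = 0" by linarith
      moreover
      { assume h: "fst s v > 0"
        then have "s \<in> P" using that by (simp add: P_def)
        then have "t \<le> (snd s - r s) / fst s v" using tP up_def by auto
        then have "fst s v * t \<le> snd s - r s" using h by (simp add: field_simps)
      }
      moreover
      { assume h: "fst s v < 0"
        then have "s \<in> M" using that by (simp add: M_def)
        then have "(snd s - r s) / fst s v \<le> t" using tM lo_def by auto
        then have "fst s v * t \<le> snd s - r s" using h by (simp add: field_simps)
      }
      moreover
      { assume h: "fst s v = 0"
        then have "s \<in> S'" using that by (simp add: S'_def Z_def)
        then have "r s \<le> snd s" using x by (simp add: sat_def r_def)
      }
      ultimately show ?thesis using eq by (auto simp: sat_def)
    qed
    then show False using insert.prems(2) by blast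
  qed
  obtain p where p: "p \<in> cone S'" "\<forall>u\<in>V. fst p u = 0" "snd p < 0"
    using insert.IH[OF \<open>finite S'\<close> inf'] by blast
  have sub: "S' \<subseteq> cone S"
  proof
    fix s assume "s \<in> S'"
    then consider "s \<in> Z" | p q where "p \<in> P" "q \<in> M" "s = comb v p q" by (auto simp: S'_def)
    then show "s \<in> cone S"
    proof cases
      case 1 then show ?thesis by (auto simp: Z_def intro: cone.intros)
    next
      case 2
      have "p \<in> cone S" "q \<in> cone S" using 2 by (auto simp: P_def M_def intro: cone.intros)
      moreover have "- fst q v \<ge> 0" "fst p v \<ge> 0" using 2 by (auto simp: P_def M_def)
      ultimately show ?thesis unfolding 2 comb_def
        by (intro cone.cadd cone.cscale) 
    qed
  qed
  have "\<forall>s\<in>S'. fst s v = 0" by (auto simp: S'_def Z_def comb_def)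
  then have "fst p v = 0" using cone_zero_coord[OF p(1)] by blast
  moreover have "p \<in> cone S" using cone_sub[OF p(1) sub] .
  ultimately show ?case using p by auto
qed

lemma sum_ind: "finite R \<Longrightarrow> r0 \<in> R \<Longrightarrow> (\<Sum>r\<in>R. (if r = r0 then 1 else 0) * (f r::real)) = f r0"
  by (simp add: if_distrib[of "\<lambda>c. c * _"] sum.delta cong: if_cong)

lemma cone_image_comb:
  assumes "finite R"
  shows "p \<in> cone (g ` R) \<Longrightarrow> \<exists>l. (\<forall>r\<in>R. 0 \<le> l r) \<and> (\<forall>u. fst p u = (\<Sum>r\<in>R. l r * fst (g r) u)) \<and> snd p = (\<Sum>r\<in>R. l r * snd (g r))"
proof (induction p rule: cone.induct)
  case czero
  then show ?case by (intro exI[of _ "\<lambda>_. 0"]) auto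
next
  case (cbase s)
  then obtain r0 where r0: "r0 \<in> R" "s = g r0" by auto
  show ?case
    by (intro exI[of _ "\<lambda>r. if r = r0 then 1 else 0"]) (simp add: r0 assms sum_ind)
next
  case (cadd p q)
  then obtain l1 l2 where "(\<forall>r\<in>R. 0 \<le> l1 r) \<and> (\<forall>u. fst p u = (\<Sum>r\<in>R. l1 r * fst (g r) u)) \<and> snd p = (\<Sum>r\<in>R. l1 r * snd (g r))"
    "(\<forall>r\<in>R. 0 \<le> l2 r) \<and> (\<forall>u. fst q u = (\<Sum>r\<in>R. l2 r * fst (g r) u)) \<and> snd q = (\<Sum>r\<in>R. l2 r * snd (g r))" by blast
  then show ?case
    by (intro exI[of _ "\<lambda>r. l1 r + l2 r"]) (simp add: distrib_right sum.distrib)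
next
  case (cscale p a)
  then obtain l1 where "(\<forall>r\<in>R. 0 \<le> l1 r) \<and> (\<forall>u. fst p u = (\<Sum>r\<in>R. l1 r * fst (g r) u)) \<and> snd p = (\<Sum>r\<in>R. l1 r * snd (g r))" by blast
  then show ?case
    by (intro exI[of _ "\<lambda>r. a * l1 r"]) (simp add: sum_distrib_left mult.assoc cscale.hyps)
qed



lemma sum_delta_plus:
  "finite A \<Longrightarrow> (\<Sum>t\<in>A. delta_plus m (mt t) (Pi t)) = (if \<forall>t\<in>A. Pi t \<in> nonneg_mats m (mt t) then 0 else \<infinity>)"
  by (induction A rule: finite_induct) (auto simp: delta_plus_def)

lemma simplex_vecs: "x \<in> simplex m \<Longrightarrow> x \<in> vecs m"
  by (simp add: simplex_def)

lemma vconj_lower: "x \<in> simplex m \<Longrightarrow> ereal (vinner m u x) \<le> vconj m (delta_simplex m) u"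
  unfolding vconj_def
  by (rule SUP_upper2[of x]) (auto simp: simplex_def delta_simplex_def)

lemma vconj_upper: "(\<And>x. x \<in> simplex m \<Longrightarrow> vinner m u x \<le> c) \<Longrightarrow> vconj m (delta_simplex m) u \<le> ereal c"
  unfolding vconj_def
  by (rule SUP_least) (auto simp: delta_simplex_def)

lemma minner_nonneg:
  "(\<forall>i<m. \<forall>j<n. 0 \<le> A i j) \<Longrightarrow> (\<forall>i<m. \<forall>j<n. 0 \<le> B i j) \<Longrightarrow> 0 \<le> minner m n A B"
  unfolding minner_def by (auto intro!: sum_nonneg)

lemma minner_ident:
  assumes "\<forall>i<m. \<forall>j<n. V i j - D i j - y i - z j = 0"
    and "\<forall>i<m. (\<Sum>j<n. Pi i j) = w i" and "\<forall>j<n. (\<Sum>i<m. Pi i j) = a j"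
  shows "minner m n D Pi = minner m n V Pi - vinner m y w - vinner n z a"
proof -
  have "minner m n D Pi = (\<Sum>i<m. \<Sum>j<n. V i j * Pi i j - y i * Pi i j - z j * Pi i j)"
    unfolding minner_def
    by (rule sum.cong, simp, rule sum.cong, simp) (use assms(1) in \<open>auto simp: algebra_simps\<close>)
  also have "\<dots> = minner m n V Pi - (\<Sum>i<m. y i * (\<Sum>j<n. Pi i j)) - (\<Sum>j<n. z j * (\<Sum>i<m. Pi i j))"
    unfolding minner_def sum_subtractf sum_distrib_left
    by (subst (2) sum.swap) (simp add: sum_distrib_left)
  also have "\<dots> = minner m n V Pi - vinner m y w - vinner n z a"
    using assms(2,3) by (simp add: vinner_def)
  finally show ?thesis .
qed

lemma total_ident:
  assumes "P_feasible N m mt a w Pi" "D_feasible N m mt D u V y z"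
  shows "(\<Sum>t<N. minner m (mt t) (D t) (Pi t)) =
    (\<Sum>t<N. minner m (mt t) (V t) (Pi t)) - vinner m u w - (\<Sum>t<N. vinner (mt t) (z t) (a t))"
proof -
  have "(\<Sum>t<N. minner m (mt t) (D t) (Pi t)) = (\<Sum>t<N. minner m (mt t) (V t) (Pi t) - vinner m (y t) w - vinner (mt t) (z t) (a t))"
    using assms by (intro sum.cong refl minner_ident) (auto simp: P_feasible_def D_feasible_def)
  also have "(\<Sum>t<N. vinner m (y t) w) = vinner m u w"
    unfolding vinner_def using assms(2)
    by (subst sum.swap) (simp add: D_feasible_def sum_distrib_right[symmetric])
  ultimately show ?thesis by (simp add: sum_subtractf)
qed



lemma if_conj_zero: "(if A \<and> B then c else (0::real)) = (if A then if B then c else 0 else 0)"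
  by simp

lemma sum2_delta: "i < (m::nat) \<Longrightarrow> j < (n::nat) \<Longrightarrow> (\<Sum>ia<m. \<Sum>ja<n. if ia = i \<and> ja = j then c else 0) = (c::real)"
proof -
  assume ij: "i < m" "j < n"
  have "(\<Sum>ja<n. if ia = i \<and> ja = j then c else 0) = (if ia = i then c else 0)" for ia
    using ij by (cases "ia = i") simp_all
  then show ?thesis using ij by simp
qed

lemma msub_facts:
  assumes "(\<lambda>i j. - L i j) \<in> msubdiff m n (delta_plus m n) V"
  shows "V \<in> nonneg_mats m n" "\<forall>i<m. \<forall>j<n. 0 \<le> L i j" "minner m n L V = 0"
proof -
  have V: "V \<in> mats m n" "delta_plus m n V \<noteq> \<infinity>"
    and ineq: "\<And>Y. Y \<in> mats m n \<Longrightarrow> delta_plus m n V + ereal (minner m n (\<lambda>i j. - L i j) (\<lambda>i j. Y i j - V i j)) \<le> delta_plus m n Y"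
    using assms by (auto simp: msubdiff_def)
  show VN: "V \<in> nonneg_mats m n" using V(2) by (auto simp: delta_plus_def split: if_splits)
  have dV: "delta_plus m n V = 0" using VN by (simp add: delta_plus_def)
  show Lnn: "\<forall>i<m. \<forall>j<n. 0 \<le> L i j"
  proof (intro allI impI)
    fix i j assume ij: "i < m" "j < n"
    define Y where "Y = (\<lambda>i' j'. V i' j' + (if i' = i \<and> j' = j then 1 else 0))"
    have "Y \<in> nonneg_mats m n" using VN ij by (auto simp: Y_def nonneg_mats_def mats_def)
    then have "Y \<in> mats m n" "delta_plus m n Y = 0" by (auto simp: nonneg_mats_def delta_plus_def)
    from ineq[OF this(1)] this(2) dV have "minner m n (\<lambda>i j. - L i j) (\<lambda>i j. Y i j - V i j) \<le> 0" by simp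
    moreover have "minner m n (\<lambda>i j. - L i j) (\<lambda>i j. Y i j - V i j) = - L i j"
      unfolding minner_def Y_def using ij
      by (simp add: if_distrib[of "\<lambda>c. _ * c"] cong: if_cong) (rule sum2_delta[OF ij])
    ultimately show "0 \<le> L i j" by simp
  qed
  have "(\<lambda>i j. 0) \<in> nonneg_mats m n" by (auto simp: nonneg_mats_def mats_def)
  then have "(\<lambda>i j. 0) \<in> mats m n" "delta_plus m n (\<lambda>i j. 0) = 0" by (auto simp: nonneg_mats_def delta_plus_def)
  from ineq[OF this(1)] this(2) dV have "minner m n (\<lambda>i j. - L i j) (\<lambda>i j. 0 - V i j) \<le> 0" by simp
  moreover have "minner m n (\<lambda>i j. - L i j) (\<lambda>i j. 0 - V i j) = minner m n L V" by (simp add: minner_def)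
  moreover have "0 \<le> minner m n L V" using Lnn VN by (intro minner_nonneg) (auto simp: nonneg_mats_def)
  ultimately show "minner m n L V = 0" by simp
qed

lemma vinner_ind: "k < m \<Longrightarrow> vinner m x (\<lambda>i. if i = k then 1 else 0) = x k"
  by (simp add: vinner_def if_distrib[of "\<lambda>c. _ * c"] sum.delta cong: if_cong)

lemma vsub_facts:
  assumes "lam \<in> vsubdiff m (vconj m (delta_simplex m)) u" "1 \<le> m"
  shows "lam \<in> simplex m" "vconj m (delta_simplex m) u = ereal (vinner m u lam)"
    "\<forall>x\<in>simplex m. vinner m u x \<le> vinner m u lam"
proof -
  let ?f = "vconj m (delta_simplex m)"
  have lu: "lam \<in> vecs m" "u \<in> vecs m" "?f u \<noteq> \<infinity>" "?f u \<noteq> -\<infinity>"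
    and ineq: "\<And>y. y \<in> vecs m \<Longrightarrow> ?f u + ereal (vinner m lam (\<lambda>i. y i - u i)) \<le> ?f y"
    using assms by (auto simp: vsubdiff_def)
  obtain U where U: "?f u = ereal U" using lu(3,4) by (cases "?f u") auto
  have B: "vinner m u x \<le> U" if "x \<in> simplex m" for x
    using vconj_lower[OF that, of u] U by simp
  have nn: "0 \<le> lam k" if "k < m" for k
  proof -
    define y where "y = (\<lambda>i. u i - (if i = k then 1 else 0))"
    have y: "y \<in> vecs m" using lu(2) that by (auto simp: y_def vecs_def)
    have "?f y \<le> ereal U"
    proof (rule vconj_upper)
      fix x assume x: "x \<in> simplex m"
      have "vinner m y x = vinner m u x - x k"
        using vinner_ind[OF that, of x] by (simp add: y_def vinner_def algebra_simps sum_subtractf)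
      moreover have "0 \<le> x k" using x that by (auto simp: simplex_def)
      ultimately show "vinner m y x \<le> U" using B[OF x] by simp
    qed
    moreover have "vinner m lam (\<lambda>i. y i - u i) = - lam k"
      using vinner_ind[OF that, of lam] by (simp add: y_def vinner_def sum_negf)
    ultimately have "ereal (U - lam k) \<le> ereal U" using ineq[OF y] U by (metis order_trans plus_ereal.simps(1) add_uminus_conv_diff)
    then show ?thesis by simp
  qed
  have s1: "c * (\<Sum>i<m. lam i) \<le> c" for c
  proof -
    define y where "y = (\<lambda>i. u i + (if i < m then c else 0))"
    have y: "y \<in> vecs m" using lu(2) by (auto simp: y_def vecs_def)
    have "?f y \<le> ereal (U + c)"
    proof (rule vconj_upper)
      fix x assume x: "x \<in> simplex m"
      have "vinner m y x = vinner m u x + c * (\<Sum>i<m. x i)"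
        by (simp add: y_def vinner_def algebra_simps sum.distrib sum_distrib_left)
      then show "vinner m y x \<le> U + c" using B[OF x] x by (simp add: simplex_def)
    qed
    moreover have "vinner m lam (\<lambda>i. y i - u i) = c * (\<Sum>i<m. lam i)"
      by (simp add: y_def vinner_def sum_distrib_left mult.commute)
    ultimately have "ereal (U + c * (\<Sum>i<m. lam i)) \<le> ereal (U + c)" using ineq[OF y] U by (metis order_trans plus_ereal.simps(1))
    then show ?thesis by simp
  qed
  have "(\<Sum>i<m. lam i) = 1" using s1[of 1] s1[of "-1"] by simp
  then show L: "lam \<in> simplex m" using nn lu(1) by (simp add: simplex_def)
  have z: "(\<lambda>i. 0) \<in> vecs m" by (simp add: vecs_def)
  have "?f (\<lambda>i. 0) \<le> ereal 0" by (rule vconj_upper) (simp add: vinner_def)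
  moreover have "vinner m lam (\<lambda>i. 0 - u i) = - vinner m u lam"
    by (simp add: vinner_def sum_negf mult.commute)
  ultimately have "ereal (U - vinner m u lam) \<le> ereal 0" using ineq[OF z] U by (metis order_trans plus_ereal.simps(1) add_uminus_conv_diff)
  then have "U \<le> vinner m u lam" by simp
  moreover have "vinner m u lam \<le> U" using B[OF L] .
  ultimately have "U = vinner m u lam" by simp
  then show "?f u = ereal (vinner m u lam)" using U by simp
  show "\<forall>x\<in>simplex m. vinner m u x \<le> vinner m u lam" using B \<open>U = _\<close> by simp
qed



lemma minner_comm: "minner m n A B = minner m n B A"
  by (simp add: minner_def mult.commute)

lemma vinner_comm: "vinner m A B = vinner m B A"
  by (simp add: vinner_def mult.commute)

lemma msub_intro:
  assumes "V \<in> nonneg_mats m n" "L \<in> nonneg_mats m n" "minner m n V L = 0"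
    "\<forall>i<m. \<forall>j<n. G i j = - V i j" "G \<in> mats m n"
  shows "G \<in> msubdiff m n (delta_plus m n) L"
proof -
  have "0 + ereal (minner m n G (\<lambda>i j. Y i j - L i j)) \<le> delta_plus m n Y" if Y: "Y \<in> mats m n" for Y
  proof (cases "Y \<in> nonneg_mats m n")
    case True
    have "minner m n G (\<lambda>i j. Y i j - L i j) = - minner m n V Y + minner m n V L"
      unfolding minner_def using assms(4)
      by (simp add: sum_negf[symmetric] sum.distrib[symmetric] algebra_simps)
    moreover have "0 \<le> minner m n V Y" using assms(1) True by (intro minner_nonneg) (auto simp: nonneg_mats_def)
    ultimately show ?thesis using True assms(3) by (simp add: delta_plus_def)
  next
    case False then show ?thesis by (simp add: delta_plus_def)
  qed
  then show ?thesis using assms by (auto simp: msubdiff_def nonneg_mats_def delta_plus_def)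
qed

lemma vsub_simplex_intro:
  assumes "g \<in> vecs m" "w \<in> simplex m" "\<forall>x\<in>simplex m. vinner m g x \<le> vinner m g w"
  shows "g \<in> vsubdiff m (delta_simplex m) w"
proof -
  have "0 + ereal (vinner m g (\<lambda>i. y i - w i)) \<le> delta_simplex m y" if "y \<in> vecs m" for y
  proof (cases "y \<in> simplex m")
    case True
    have "vinner m g (\<lambda>i. y i - w i) = vinner m g y - vinner m g w"
      by (simp add: vinner_def algebra_simps sum_subtractf)
    then show ?thesis using True assms(3) by (simp add: delta_simplex_def)
  next
    case False then show ?thesis by (simp add: delta_simplex_def)
  qed
  then show ?thesis using assms by (auto simp: vsubdiff_def delta_simplex_def simplex_def)
qed

lemma vsub_conj_intro:
  assumes "u \<in> vecs m" "lam \<in> simplex m" "\<forall>x\<in>simplex m. vinner m u x \<le> vinner m u lam"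
  shows "lam \<in> vsubdiff m (vconj m (delta_simplex m)) u"
proof -
  have fu: "vconj m (delta_simplex m) u = ereal (vinner m u lam)"
    using vconj_upper[of m u "vinner m u lam"] vconj_lower[OF assms(2), of u] assms(3)
    by (auto intro: antisym)
  have "vconj m (delta_simplex m) u + ereal (vinner m lam (\<lambda>i. y i - u i)) \<le> vconj m (delta_simplex m) y" for y
  proof -
    have "vinner m u lam + vinner m lam (\<lambda>i. y i - u i) = vinner m y lam"
      by (simp add: vinner_def algebra_simps sum_subtractf)
    then show ?thesis using fu vconj_lower[OF assms(2), of y] by simp
  qed
  then show ?thesis using assms fu by (auto simp: vsubdiff_def simplex_def)
qed

lemma P_obj_fin:
  assumes "w \<in> simplex m" "\<forall>t<N. Pi t \<in> nonneg_mats m (mt t)"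
  shows "P_obj N m mt D w Pi = ereal (\<Sum>t<N. minner m (mt t) (D t) (Pi t))"
  using assms by (simp add: P_obj_def delta_simplex_def sum_delta_plus)

lemma P_obj_inf:
  assumes "\<not> (w \<in> simplex m \<and> (\<forall>t<N. Pi t \<in> nonneg_mats m (mt t)))"
  shows "P_obj N m mt D w Pi = \<infinity>"
  using assms by (auto simp: P_obj_def delta_simplex_def sum_delta_plus)

lemma vconj_not_minf: "1 \<le> m \<Longrightarrow> vconj m (delta_simplex m) u \<noteq> -\<infinity>"
proof -
  assume "1 \<le> m"
  define e where "e = (\<lambda>i::nat. if i = 0 then (1::real) else 0)"
  have "e \<in> simplex m" using \<open>1 \<le> m\<close> by (auto simp: e_def simplex_def vecs_def)
  from vconj_lower[OF this, of u] show ?thesis by auto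
qed

lemma D_obj_fin:
  assumes "\<forall>t<N. V t \<in> nonneg_mats m (mt t)"
  shows "D_obj N m mt a u V z = vconj m (delta_simplex m) u + ereal (\<Sum>t<N. vinner (mt t) (z t) (a t))"
  using assms by (simp add: D_obj_def sum_delta_plus)

lemma D_obj_inf:
  assumes "1 \<le> m" "\<not> (\<forall>t<N. V t \<in> nonneg_mats m (mt t))"
  shows "D_obj N m mt a u V z = \<infinity>"
proof -
  obtain r where "vconj m (delta_simplex m) u = ereal r \<or> vconj m (delta_simplex m) u = \<infinity>"
    using vconj_not_minf[OF assms(1), of u] by (cases "vconj m (delta_simplex m) u") auto
  then show ?thesis using assms by (auto simp: D_obj_def sum_delta_plus)
qed

lemma kktD_facts:
  assumes "1 \<le> m" "KKT_D N m mt D a u V y z lam Lam"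
  shows "lam \<in> simplex m" "vconj m (delta_simplex m) u = ereal (vinner m u lam)"
    "\<forall>x\<in>simplex m. vinner m u x \<le> vinner m u lam"
    "\<forall>t<N. V t \<in> nonneg_mats m (mt t) \<and> Lam t \<in> nonneg_mats m (mt t) \<and> minner m (mt t) (V t) (Lam t) = 0"
    "P_feasible N m mt a lam Lam" "D_feasible N m mt D u V y z"
proof -
  have l: "lam \<in> vsubdiff m (vconj m (delta_simplex m)) u" using assms(2) by (simp add: KKT_D_def)
  show "lam \<in> simplex m" "vconj m (delta_simplex m) u = ereal (vinner m u lam)"
    "\<forall>x\<in>simplex m. vinner m u x \<le> vinner m u lam" using vsub_facts[OF l assms(1)] by auto
  show "\<forall>t<N. V t \<in> nonneg_mats m (mt t) \<and> Lam t \<in> nonneg_mats m (mt t) \<and> minner m (mt t) (V t) (Lam t) = 0"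
  proof (intro allI impI)
    fix t assume t: "t < N"
    have "(\<lambda>i j. - Lam t i j) \<in> msubdiff m (mt t) (delta_plus m (mt t)) (V t)" "Lam t \<in> mats m (mt t)"
      using assms(2) t by (auto simp: KKT_D_def)
    from msub_facts[OF this(1)] this(2) show "V t \<in> nonneg_mats m (mt t) \<and> Lam t \<in> nonneg_mats m (mt t) \<and> minner m (mt t) (V t) (Lam t) = 0"
      by (auto simp: nonneg_mats_def minner_comm)
  qed
  show "P_feasible N m mt a lam Lam" "D_feasible N m mt D u V y z"
    using assms(2) by (auto simp: KKT_D_def P_feasible_def D_feasible_def)
qed

lemma kktD_optimal:
  assumes m: "1 \<le> m" and K: "KKT_D N m mt D a u V y z lam Lam"
  shows "D_optimal N m mt D a u V y z \<and> P_optimal N m mt D a lam Lam"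
proof -
  note F = kktD_facts[OF m K]
  define Kv where "Kv = vinner m u lam + (\<Sum>t<N. vinner (mt t) (z t) (a t))"
  have id: "(\<Sum>t<N. minner m (mt t) (D t) (Lam t)) = - Kv"
    using total_ident[OF F(5) F(6)] F(4) by (simp add: Kv_def minner_comm vinner_comm)
  have Pobj: "P_obj N m mt D lam Lam = ereal (- Kv)"
    using P_obj_fin[of lam m N Lam mt D] F(1,4) id by simp
  have Dobj: "D_obj N m mt a u V z = ereal Kv"
    using D_obj_fin[of N V m mt a u z] F(2,4) by (simp add: Kv_def)
  have Dopt: "D_obj N m mt a u V z \<le> D_obj N m mt a u' V' z'" if DF: "D_feasible N m mt D u' V' y' z'" for u' V' y' z'
  proof (cases "\<forall>t<N. V' t \<in> nonneg_mats m (mt t)")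
    case True
    have "(\<Sum>t<N. minner m (mt t) (D t) (Lam t)) =
      (\<Sum>t<N. minner m (mt t) (V' t) (Lam t)) - vinner m u' lam - (\<Sum>t<N. vinner (mt t) (z' t) (a t))"
      by (rule total_ident[OF F(5) DF])
    moreover have "0 \<le> (\<Sum>t<N. minner m (mt t) (V' t) (Lam t))"
      using True F(4) by (intro sum_nonneg minner_nonneg) (auto simp: nonneg_mats_def)
    ultimately have "Kv \<le> vinner m u' lam + (\<Sum>t<N. vinner (mt t) (z' t) (a t))" using id by simp
    also have "ereal (vinner m u' lam + (\<Sum>t<N. vinner (mt t) (z' t) (a t))) \<le> vconj m (delta_simplex m) u' + ereal (\<Sum>t<N. vinner (mt t) (z' t) (a t))"
      using add_right_mono[OF vconj_lower[OF F(1), of u'], of "ereal (\<Sum>t<N. vinner (mt t) (z' t) (a t))"] by simp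
    finally show ?thesis using D_obj_fin[OF True] Dobj by simp
  next
    case False
    then show ?thesis using D_obj_inf[OF m False] by simp
  qed
  have Popt: "P_obj N m mt D lam Lam \<le> P_obj N m mt D w' Pi'" if PF: "P_feasible N m mt a w' Pi'" for w' Pi'
  proof (cases "w' \<in> simplex m \<and> (\<forall>t<N. Pi' t \<in> nonneg_mats m (mt t))")
    case True
    have "(\<Sum>t<N. minner m (mt t) (D t) (Pi' t)) =
      (\<Sum>t<N. minner m (mt t) (V t) (Pi' t)) - vinner m u w' - (\<Sum>t<N. vinner (mt t) (z t) (a t))"
      by (rule total_ident[OF PF F(6)])
    moreover have "0 \<le> (\<Sum>t<N. minner m (mt t) (V t) (Pi' t))"
      using True F(4) by (intro sum_nonneg minner_nonneg) (auto simp: nonneg_mats_def)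
    moreover have "vinner m u w' \<le> vinner m u lam" using F(3) True by auto
    ultimately have "- Kv \<le> (\<Sum>t<N. minner m (mt t) (D t) (Pi' t))" by (simp add: Kv_def)
    then show ?thesis using P_obj_fin[of w' m N Pi' mt D] True Pobj by simp
  next
    case False
    then show ?thesis using P_obj_inf[OF False] by simp
  qed
  show ?thesis using Dopt Popt F(5,6) by (auto simp: D_optimal_def P_optimal_def)
qed

lemma kktD_to_P:
  assumes m: "1 \<le> m" and K: "KKT_D N m mt D a u V y z lam Lam"
  shows "KKT_P N m mt D a lam Lam y z"
proof -
  note F = kktD_facts[OF m K]
  have yv: "\<forall>t<N. y t \<in> vecs m \<and> z t \<in> vecs (mt t) \<and> Lam t \<in> mats m (mt t)" and u: "u \<in> vecs m"
    and yu: "\<forall>i<m. (\<Sum>t<N. y t i) - u i = 0"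
    and VD: "\<forall>t<N. \<forall>i<m. \<forall>j<mt t. V t i j - D t i j - y t i - z t j = 0"
    using K by (auto simp: KKT_D_def)
  have VD': "\<forall>t<N. \<forall>i<m. \<forall>j<mt t. V t i j = D t i j + y t i + z t j"
  proof (intro allI impI)
    fix t i j assume "t < N" "i < m" "j < mt t"
    then have "V t i j - D t i j - y t i - z t j = 0" using VD by blast
    then show "V t i j = D t i j + y t i + z t j" by simp
  qed
  have g: "(\<lambda>i. \<Sum>t<N. y t i) \<in> vecs m" using yv by (auto simp: vecs_def)
  have gi: "vinner m (\<lambda>i. \<Sum>t<N. y t i) x = vinner m u x" for x
    unfolding vinner_def using yu by (intro sum.cong) auto
  have s1: "(\<lambda>i. \<Sum>t<N. y t i) \<in> vsubdiff m (delta_simplex m) lam"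
    by (rule vsub_simplex_intro[OF g F(1)]) (use F(3) gi in auto)
  have s2: "(\<lambda>i j. if i < m \<and> j < mt t then - (D t i j + y t i + z t j) else 0)
              \<in> msubdiff m (mt t) (delta_plus m (mt t)) (Lam t)" if t: "t < N" for t
    by (rule msub_intro) (use F(4) t VD' in \<open>auto simp: mats_def\<close>)
  show ?thesis using s1 s2 F(1) yv by (auto simp: KKT_P_def simplex_def F(5)[unfolded P_feasible_def])
qed



lemma core_contra:
  fixes al Lm :: "nat \<Rightarrow> nat \<Rightarrow> nat \<Rightarrow> real" and be ga :: "nat \<Rightarrow> nat \<Rightarrow> real" and la :: "nat \<Rightarrow> real"
  assumes N: "1 \<le> N" and m: "1 \<le> m"
    and a0: "\<forall>t<N. \<forall>j<mt t. 0 \<le> a t j" and a1: "\<forall>t<N. (\<Sum>j<mt t. a t j) = 1"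
    and alp: "\<forall>t<N. \<forall>i<m. \<forall>j<mt t. 0 \<le> al t i j"
    and Lmp: "\<forall>t<N. \<forall>i<m. \<forall>j<mt t. 0 \<le> Lm t i j"
    and lap: "\<forall>i<m. 0 \<le> la i" and th: "0 \<le> th"
    and EP: "\<forall>t<N. \<forall>i<m. \<forall>j<mt t. al t i j = be t i + ga t j + th * D t i j"
    and EW: "\<forall>i<m. (\<Sum>t<N. be t i) = 0"
    and EY: "\<forall>t<N. \<forall>i<m. (\<Sum>j<mt t. Lm t i j) = la i"
    and EZ: "\<forall>t<N. \<forall>j<mt t. (\<Sum>i<m. Lm t i j) = th * a t j"
    and ES: "(\<Sum>i<m. la i) = th"
    and RHS: "(\<Sum>t<N. \<Sum>j<mt t. ga t j * a t j) + (\<Sum>t<N. \<Sum>i<m. \<Sum>j<mt t. Lm t i j * D t i j) < 0"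
  shows False
proof (cases "th = 0")
  case True
  have la0: "\<forall>i<m. la i = 0"
  proof -
    have "(\<Sum>i<m. la i) = 0" using ES True by simp
    then show ?thesis using lap by (subst (asm) sum_nonneg_eq_0_iff) auto
  qed
  have Lm0: "Lm t i j = 0" if "t < N" "i < m" "j < mt t" for t i j
  proof -
    have "(\<Sum>j<mt t. Lm t i j) = 0" using EY la0 that by auto
    then show ?thesis using Lmp that by (subst (asm) sum_nonneg_eq_0_iff) auto
  qed
  have "(\<Sum>t<N. \<Sum>i<m. \<Sum>j<mt t. Lm t i j * D t i j) = 0"
    using Lm0 by (intro sum.neutral ballI) auto
  then have neg: "(\<Sum>t<N. \<Sum>j<mt t. ga t j * a t j) < 0" using RHS by simp
  have "0 \<le> (\<Sum>t<N. \<Sum>j<mt t. al t 0 j * a t j)"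
    using alp a0 m by (intro sum_nonneg mult_nonneg_nonneg) auto
  also have "\<dots> = (\<Sum>t<N. \<Sum>j<mt t. be t 0 * a t j + ga t j * a t j)"
    using EP m True by (intro sum.cong refl) (auto simp: algebra_simps)
  also have "\<dots> = (\<Sum>t<N. be t 0) + (\<Sum>t<N. \<Sum>j<mt t. ga t j * a t j)"
    using a1 by (simp add: sum.distrib sum_distrib_left[symmetric])
  also have "\<dots> < 0" using EW m neg by simp
  finally show False by simp
next
  case False
  then have thp: "0 < th" using th by simp
  have "0 \<le> (\<Sum>t<N. \<Sum>i<m. \<Sum>j<mt t. al t i j * Lm t i j)"
    using alp Lmp by (intro sum_nonneg mult_nonneg_nonneg) auto
  also have "\<dots> = (\<Sum>t<N. \<Sum>i<m. \<Sum>j<mt t. be t i * Lm t i j + ga t j * Lm t i j + th * (Lm t i j * D t i j))"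
    using EP by (intro sum.cong refl) (auto simp: algebra_simps)
  also have "\<dots> = (\<Sum>t<N. \<Sum>i<m. be t i * la i) + (\<Sum>t<N. \<Sum>j<mt t. ga t j * (th * a t j))
       + th * (\<Sum>t<N. \<Sum>i<m. \<Sum>j<mt t. Lm t i j * D t i j)"
  proof -
    have 1: "(\<Sum>t<N. \<Sum>i<m. \<Sum>j<mt t. be t i * Lm t i j) = (\<Sum>t<N. \<Sum>i<m. be t i * la i)"
      using EY by (intro sum.cong[OF refl]) (simp add: sum_distrib_left[symmetric])
    have 2: "(\<Sum>t<N. \<Sum>i<m. \<Sum>j<mt t. ga t j * Lm t i j) = (\<Sum>t<N. \<Sum>j<mt t. ga t j * (th * a t j))"
    proof (rule sum.cong[OF refl])
      fix t assume "t \<in> {..<N}"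
      then show "(\<Sum>i<m. \<Sum>j<mt t. ga t j * Lm t i j) = (\<Sum>j<mt t. ga t j * (th * a t j))"
        using EZ by (subst sum.swap) (simp add: sum_distrib_left[symmetric])
    qed
    show ?thesis using 1 2 by (simp add: sum.distrib sum_distrib_left)
  qed
  also have "(\<Sum>t<N. \<Sum>i<m. be t i * la i) = 0"
    using EW by (subst sum.swap) (simp add: sum_distrib_right[symmetric])
  also have "(\<Sum>t<N. \<Sum>j<mt t. ga t j * (th * a t j)) = th * (\<Sum>t<N. \<Sum>j<mt t. ga t j * a t j)"
    by (simp add: sum_distrib_left algebra_simps)
  finally have "0 \<le> th * ((\<Sum>t<N. \<Sum>j<mt t. ga t j * a t j) + (\<Sum>t<N. \<Sum>i<m. \<Sum>j<mt t. Lm t i j * D t i j))"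
    by (simp add: algebra_simps)
  moreover have "th * ((\<Sum>t<N. \<Sum>j<mt t. ga t j * a t j) + (\<Sum>t<N. \<Sum>i<m. \<Sum>j<mt t. Lm t i j * D t i j)) < 0"
    using thp RHS by (simp add: mult_pos_neg)
  ultimately show False by simp
qed



lemma construct_kkt:
  fixes Pi :: "nat \<Rightarrow> nat \<Rightarrow> nat \<Rightarrow> real" and w s :: _ and y z :: "nat \<Rightarrow> nat \<Rightarrow> real"
  assumes N: "1 \<le> N" and m: "1 \<le> m"
    and a1: "\<forall>t<N. (\<Sum>j<mt t. a t j) = 1"
    and C1: "\<forall>t<N. \<forall>i<m. \<forall>j<mt t. 0 \<le> Pi t i j"
    and C2: "\<forall>t<N. \<forall>i<m. (\<Sum>j<mt t. Pi t i j) = w i"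
    and C3: "\<forall>t<N. \<forall>j<mt t. (\<Sum>i<m. Pi t i j) = a t j"
    and C4: "\<forall>t<N. \<forall>i<m. \<forall>j<mt t. 0 \<le> D t i j + y t i + z t j"
    and C5: "\<forall>i<m. (\<Sum>t<N. y t i) \<le> s"
    and C6: "(\<Sum>t<N. \<Sum>i<m. \<Sum>j<mt t. D t i j * Pi t i j) + s + (\<Sum>t<N. \<Sum>j<mt t. z t j * a t j) \<le> 0"
  shows "\<exists>u V y z lam Lam. KKT_D N m mt D a u V y z lam Lam"
proof -
  define w' where "w' i = (if i < m then w i else 0)" for i
  define Pi' where "Pi' t i j = (if i < m \<and> j < mt t then Pi t i j else 0)" for t i j
  define y' where "y' t i = (if i < m then y t i else 0)" for t i
  define z' where "z' t j = (if j < mt t then z t j else 0)" for t j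
  define u where "u i = (if i < m then (\<Sum>t<N. y t i) else 0)" for i
  define V where "V t i j = (if i < m \<and> j < mt t then D t i j + y t i + z t j else 0)" for t i j
  have w0: "0 \<le> w i" if "i < m" for i
  proof -
    have "w i = (\<Sum>j<mt 0. Pi 0 i j)" using C2 N that by auto
    also have "0 \<le> \<dots>" using C1 N that by (intro sum_nonneg) auto
    finally show ?thesis .
  qed
  have "(\<Sum>i<m. w i) = (\<Sum>i<m. \<Sum>j<mt 0. Pi 0 i j)" using C2 N by auto
  also have "\<dots> = (\<Sum>j<mt 0. a 0 j)" using C3 N by (subst sum.swap) simp
  also have "\<dots> = 1" using a1 N by auto
  finally have "(\<Sum>i<m. w i) = 1" .
  then have wS: "w' \<in> simplex m" using w0 by (auto simp: simplex_def w'_def vecs_def)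
  have PF: "P_feasible N m mt a w' Pi'"
    using C2 C3 by (auto simp: P_feasible_def w'_def Pi'_def vecs_def mats_def)
  have DF: "D_feasible N m mt D u V y' z'"
    by (auto simp: D_feasible_def u_def V_def y'_def z'_def vecs_def mats_def)
  have Pin: "\<forall>t<N. Pi' t \<in> nonneg_mats m (mt t)" using C1 by (auto simp: nonneg_mats_def mats_def Pi'_def)
  have Vn: "\<forall>t<N. V t \<in> nonneg_mats m (mt t)" using C4 by (auto simp: nonneg_mats_def mats_def V_def)
  have ux: "vinner m u x \<le> s" if "x \<in> simplex m" for x
  proof -
    have "vinner m u x \<le> (\<Sum>i<m. s * x i)"
      unfolding vinner_def u_def using that C5
      by (intro sum_mono) (auto simp: simplex_def intro: mult_right_mono)
    also have "\<dots> = s" using that by (simp add: simplex_def sum_distrib_left[symmetric])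
    finally show ?thesis .
  qed
  have id: "(\<Sum>t<N. minner m (mt t) (D t) (Pi' t)) =
    (\<Sum>t<N. minner m (mt t) (V t) (Pi' t)) - vinner m u w' - (\<Sum>t<N. vinner (mt t) (z' t) (a t))"
    by (rule total_ident[OF PF DF])
  have e1: "(\<Sum>t<N. minner m (mt t) (D t) (Pi' t)) = (\<Sum>t<N. \<Sum>i<m. \<Sum>j<mt t. D t i j * Pi t i j)"
    by (simp add: minner_def Pi'_def)
  have e2: "(\<Sum>t<N. vinner (mt t) (z' t) (a t)) = (\<Sum>t<N. \<Sum>j<mt t. z t j * a t j)"
    by (simp add: vinner_def z'_def)
  have nn: "\<forall>t\<in>{..<N}. 0 \<le> minner m (mt t) (V t) (Pi' t)"
    using Vn Pin by (auto intro!: minner_nonneg simp: nonneg_mats_def)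
  have "0 \<le> (\<Sum>t<N. minner m (mt t) (V t) (Pi' t))" using nn by (intro sum_nonneg) auto
  have uw: "vinner m u w' \<le> s" using ux[OF wS] .
  have S0: "(\<Sum>t<N. minner m (mt t) (V t) (Pi' t)) = 0" and uw2: "s \<le> vinner m u w'"
    using id C6 e1 e2 uw \<open>0 \<le> (\<Sum>t<N. minner m (mt t) (V t) (Pi' t))\<close> by linarith+
  have VP0: "minner m (mt t) (V t) (Pi' t) = 0" if "t < N" for t
    using S0 nn that by (subst (asm) sum_nonneg_eq_0_iff) auto
  have mx: "\<forall>x\<in>simplex m. vinner m u x \<le> vinner m u w'" using ux uw2 by fastforce
  have uv: "u \<in> vecs m" by (simp add: u_def vecs_def)
  have K: "KKT_D N m mt D a u V y' z' w' Pi'"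
    unfolding KKT_D_def
  proof (intro conjI allI impI)
    show "w' \<in> vsubdiff m (vconj m (delta_simplex m)) u" by (rule vsub_conj_intro[OF uv wS mx])
    fix t assume t: "t < N"
    show "(\<lambda>i j. - Pi' t i j) \<in> msubdiff m (mt t) (delta_plus m (mt t)) (V t)"
      by (rule msub_intro[where V="Pi' t"]) (use Pin Vn VP0 t in \<open>auto simp: minner_comm nonneg_mats_def mats_def\<close>)
  qed (use DF PF wS in \<open>auto simp: D_feasible_def P_feasible_def simplex_def\<close>)
  then show ?thesis by blast
qed



datatype var = VP nat nat nat | VW nat | VY nat nat | VZ nat nat | VS
datatype row = RA nat nat nat | RBp nat nat | RBm nat nat | RCp nat nat | RCm nat nat | RF nat nat nat | RG nat | RH

fun vvalid :: "nat \<Rightarrow> nat \<Rightarrow> (nat \<Rightarrow> nat) \<Rightarrow> var \<Rightarrow> bool" where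
  "vvalid N m mt (VP t i j) = (t < N \<and> i < m \<and> j < mt t)"
| "vvalid N m mt (VW i) = (i < m)"
| "vvalid N m mt (VY t i) = (t < N \<and> i < m)"
| "vvalid N m mt (VZ t j) = (t < N \<and> j < mt t)"
| "vvalid N m mt VS = True"

fun rvalid :: "nat \<Rightarrow> nat \<Rightarrow> (nat \<Rightarrow> nat) \<Rightarrow> row \<Rightarrow> bool" where
  "rvalid N m mt (RA t i j) = (t < N \<and> i < m \<and> j < mt t)"
| "rvalid N m mt (RBp t i) = (t < N \<and> i < m)"
| "rvalid N m mt (RBm t i) = (t < N \<and> i < m)"
| "rvalid N m mt (RCp t j) = (t < N \<and> j < mt t)"
| "rvalid N m mt (RCm t j) = (t < N \<and> j < mt t)"
| "rvalid N m mt (RF t i j) = (t < N \<and> i < m \<and> j < mt t)"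
| "rvalid N m mt (RG i) = (i < m)"
| "rvalid N m mt RH = True"

fun coef :: "(nat \<Rightarrow> nat \<Rightarrow> nat \<Rightarrow> real) \<Rightarrow> (nat \<Rightarrow> nat \<Rightarrow> real) \<Rightarrow> row \<Rightarrow> var \<Rightarrow> real" where
  "coef D a (RA t i j) (VP t' i' j') = (if t' = t \<and> i' = i \<and> j' = j then -1 else 0)"
| "coef D a (RBp t i) (VP t' i' j') = (if t' = t \<and> i' = i then 1 else 0)"
| "coef D a (RBp t i) (VW i') = (if i' = i then -1 else 0)"
| "coef D a (RBm t i) (VP t' i' j') = (if t' = t \<and> i' = i then -1 else 0)"
| "coef D a (RBm t i) (VW i') = (if i' = i then 1 else 0)"
| "coef D a (RCp t j) (VP t' i' j') = (if t' = t \<and> j' = j then 1 else 0)"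
| "coef D a (RCm t j) (VP t' i' j') = (if t' = t \<and> j' = j then -1 else 0)"
| "coef D a (RF t i j) (VY t' i') = (if t' = t \<and> i' = i then -1 else 0)"
| "coef D a (RF t i j) (VZ t' j') = (if t' = t \<and> j' = j then -1 else 0)"
| "coef D a (RG i) (VY t' i') = (if i' = i then 1 else 0)"
| "coef D a (RG i) VS = -1"
| "coef D a RH (VP t i j) = D t i j"
| "coef D a RH (VZ t j) = a t j"
| "coef D a RH VS = 1"
| "coef D a _ _ = 0"

fun rhs :: "(nat \<Rightarrow> nat \<Rightarrow> nat \<Rightarrow> real) \<Rightarrow> (nat \<Rightarrow> nat \<Rightarrow> real) \<Rightarrow> row \<Rightarrow> real" where
  "rhs D a (RCp t j) = a t j"
| "rhs D a (RCm t j) = - a t j"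
| "rhs D a (RF t i j) = D t i j"
| "rhs D a _ = 0"

lemma mt_le: "(t::nat) < N \<Longrightarrow> (mt t::nat) \<le> (\<Sum>t<N. mt t)"
  by (simp add: sum.remove)

lemma fin_V: "finite {v. vvalid N m mt v}"
proof -
  define B where "B = N + m + (\<Sum>t<N. mt t)"
  have "{v. vvalid N m mt v} \<subseteq> (\<lambda>(t,i,j). VP t i j) ` ({..<B} \<times> {..<B} \<times> {..<B}) \<union> VW ` {..<B}
     \<union> (\<lambda>(t,i). VY t i) ` ({..<B} \<times> {..<B}) \<union> (\<lambda>(t,i). VZ t i) ` ({..<B} \<times> {..<B}) \<union> {VS}"
  proof
    fix v assume "v \<in> {v. vvalid N m mt v}"
    then show "v \<in> (\<lambda>(t,i,j). VP t i j) ` ({..<B} \<times> {..<B} \<times> {..<B}) \<union> VW ` {..<B}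
     \<union> (\<lambda>(t,i). VY t i) ` ({..<B} \<times> {..<B}) \<union> (\<lambda>(t,i). VZ t i) ` ({..<B} \<times> {..<B}) \<union> {VS}"
      by (cases v) (auto simp: B_def image_iff dest!: mt_le[of _ N mt])
  qed
  then show ?thesis by (rule finite_subset) auto
qed

lemma fin_R: "finite {r. rvalid N m mt r}"
proof -
  define B where "B = N + m + (\<Sum>t<N. mt t)"
  define C where "C = {..<B} \<times> {..<B}"
  have "{r. rvalid N m mt r} \<subseteq> (\<lambda>(t,i,j). RA t i j) ` ({..<B} \<times> C) \<union> (\<lambda>(t,i,j). RF t i j) ` ({..<B} \<times> C)
     \<union> (\<lambda>(t,i). RBp t i) ` C \<union> (\<lambda>(t,i). RBm t i) ` C \<union> (\<lambda>(t,i). RCp t i) ` C \<union> (\<lambda>(t,i). RCm t i) ` C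
     \<union> RG ` {..<B} \<union> {RH}"
  proof
    fix r assume "r \<in> {r. rvalid N m mt r}"
    then show "r \<in> (\<lambda>(t,i,j). RA t i j) ` ({..<B} \<times> C) \<union> (\<lambda>(t,i,j). RF t i j) ` ({..<B} \<times> C)
     \<union> (\<lambda>(t,i). RBp t i) ` C \<union> (\<lambda>(t,i). RBm t i) ` C \<union> (\<lambda>(t,i). RCp t i) ` C \<union> (\<lambda>(t,i). RCm t i) ` C
     \<union> RG ` {..<B} \<union> {RH}"
      by (cases r) (auto simp: B_def C_def image_iff dest!: mt_le[of _ N mt])
  qed
  then show ?thesis by (rule finite_subset) (auto simp: C_def)
qed



lemma sum_restrict: "finite A \<Longrightarrow> F \<subseteq> A \<Longrightarrow> (\<And>x. x \<in> A \<Longrightarrow> x \<notin> F \<Longrightarrow> f x = 0) \<Longrightarrow> sum f A = sum f F"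
  by (rule sum.mono_neutral_right) auto

lemma sum2s: "(\<Sum>(t,j)\<in>(SIGMA t:{..<N::nat}. {..<mt t}). f t j) = (\<Sum>t<N. \<Sum>j<(mt t::nat). f t j)"
  by (simp add: sum.Sigma[symmetric])

lemma sum3s: "(\<Sum>(t,i,j)\<in>(SIGMA t:{..<N::nat}. {..<m::nat} \<times> {..<(mt t::nat)}). f t i j) = (\<Sum>t<N. \<Sum>i<m. \<Sum>j<mt t. f t i j)"
  by (simp add: sum.Sigma[symmetric] sum.cartesian_product[symmetric])

abbreviation "Vs N m mt \<equiv> {v. vvalid N m mt v}"
abbreviation "Rs N m mt \<equiv> {r. rvalid N m mt r}"


lemma row_RA: "t < N \<Longrightarrow> i < m \<Longrightarrow> j < mt t \<Longrightarrow>
  (\<Sum>v\<in>Vs N m mt. coef D a (RA t i j) v * x v) = - x (VP t i j)"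
  apply (subst sum_restrict[OF fin_V, where F="{VP t i j}"])
    apply simp
  subgoal for v by (cases v) auto
  apply simp
  done

lemma row_RBp: "t < N \<Longrightarrow> i < m \<Longrightarrow>
  (\<Sum>v\<in>Vs N m mt. coef D a (RBp t i) v * x v) = (\<Sum>j<mt t. x (VP t i j)) - x (VW i)"
  apply (subst sum_restrict[OF fin_V, where F="insert (VW i) ((\<lambda>j. VP t i j) ` {..<mt t})"])
    apply auto[1]
  subgoal for v by (cases v) auto
  apply (subst sum.insert)
    apply auto[2]
  apply (subst sum.reindex)
   apply (simp add: inj_on_def)
  apply simp
  done

lemma row_RBm: "t < N \<Longrightarrow> i < m \<Longrightarrow>
  (\<Sum>v\<in>Vs N m mt. coef D a (RBm t i) v * x v) = x (VW i) - (\<Sum>j<mt t. x (VP t i j))"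
  apply (subst sum_restrict[OF fin_V, where F="insert (VW i) ((\<lambda>j. VP t i j) ` {..<mt t})"])
    apply auto[1]
  subgoal for v by (cases v) auto
  apply (subst sum.insert)
    apply auto[2]
  apply (subst sum.reindex)
   apply (simp add: inj_on_def)
  apply (simp add: sum_negf)
  done

lemma row_RCp: "t < N \<Longrightarrow> j < mt t \<Longrightarrow>
  (\<Sum>v\<in>Vs N m mt. coef D a (RCp t j) v * x v) = (\<Sum>i<m. x (VP t i j))"
  apply (subst sum_restrict[OF fin_V, where F="(\<lambda>i. VP t i j) ` {..<m}"])
    apply auto[1]
  subgoal for v by (cases v) auto
  apply (subst sum.reindex)
   apply (simp add: inj_on_def)
  apply simp
  done

lemma row_RCm: "t < N \<Longrightarrow> j < mt t \<Longrightarrow>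
  (\<Sum>v\<in>Vs N m mt. coef D a (RCm t j) v * x v) = - (\<Sum>i<m. x (VP t i j))"
  apply (subst sum_restrict[OF fin_V, where F="(\<lambda>i. VP t i j) ` {..<m}"])
    apply auto[1]
  subgoal for v by (cases v) auto
  apply (subst sum.reindex)
   apply (simp add: inj_on_def)
  apply (simp add: sum_negf)
  done

lemma row_RF: "t < N \<Longrightarrow> i < m \<Longrightarrow> j < mt t \<Longrightarrow>
  (\<Sum>v\<in>Vs N m mt. coef D a (RF t i j) v * x v) = - x (VY t i) - x (VZ t j)"
  apply (subst sum_restrict[OF fin_V, where F="{VY t i, VZ t j}"])
    apply simp
  subgoal for v by (cases v) auto
  apply simp
  done

lemma row_RG: "i < m \<Longrightarrow>
  (\<Sum>v\<in>Vs N m mt. coef D a (RG i) v * x v) = (\<Sum>t<N. x (VY t i)) - x VS"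
  apply (subst sum_restrict[OF fin_V, where F="insert VS ((\<lambda>t. VY t i) ` {..<N})"])
    apply auto[1]
  subgoal for v by (cases v) auto
  apply (subst sum.insert)
    apply auto[2]
  apply (subst sum.reindex)
   apply (simp add: inj_on_def)
  apply simp
  done

lemma row_RH:
  "(\<Sum>v\<in>Vs N m mt. coef D a RH v * x v) = (\<Sum>t<N. \<Sum>i<m. \<Sum>j<mt t. D t i j * x (VP t i j))
      + (\<Sum>t<N. \<Sum>j<mt t. a t j * x (VZ t j)) + x VS"
proof -
  let ?A = "(\<lambda>(t,i,j). VP t i j) ` (SIGMA t:{..<N}. {..<m} \<times> {..<mt t})"
  let ?B = "(\<lambda>(t,j). VZ t j) ` (SIGMA t:{..<N}. {..<mt t})"
  have "(\<Sum>v\<in>Vs N m mt. coef D a RH v * x v) = (\<Sum>v\<in>insert VS (?A \<union> ?B). coef D a RH v * x v)"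
    apply (rule sum_restrict[OF fin_V])
     apply auto[1]
    subgoal for v by (cases v) (auto simp: image_iff)
    done
  also have "\<dots> = x VS + ((\<Sum>v\<in>?A. coef D a RH v * x v) + (\<Sum>v\<in>?B. coef D a RH v * x v))"
  proof -
    have "(\<Sum>v\<in>?A \<union> ?B. coef D a RH v * x v) = (\<Sum>v\<in>?A. coef D a RH v * x v) + (\<Sum>v\<in>?B. coef D a RH v * x v)"
      by (rule sum.union_disjoint) auto
    then show ?thesis by (subst sum.insert) auto
  qed
  also have "(\<Sum>v\<in>?A. coef D a RH v * x v) = (\<Sum>t<N. \<Sum>i<m. \<Sum>j<mt t. D t i j * x (VP t i j))"
    by (subst sum.reindex) (auto simp: inj_on_def case_prod_beta sum3s[symmetric] intro!: sum.cong)
  also have "(\<Sum>v\<in>?B. coef D a RH v * x v) = (\<Sum>t<N. \<Sum>j<mt t. a t j * x (VZ t j))"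
    by (subst sum.reindex) (auto simp: inj_on_def case_prod_beta sum2s[symmetric] intro!: sum.cong)
  finally show ?thesis by simp
qed



lemma col_VP: "t < N \<Longrightarrow> i < m \<Longrightarrow> j < mt t \<Longrightarrow>
  (\<Sum>r\<in>Rs N m mt. l r * coef D a r (VP t i j)) =
   - l (RA t i j) + l (RBp t i) - l (RBm t i) + l (RCp t j) - l (RCm t j) + l RH * D t i j"
  apply (subst sum_restrict[OF fin_R, where F="{RA t i j, RBp t i, RBm t i, RCp t j, RCm t j, RH}"])
    apply simp
  subgoal for r by (cases r) auto
  apply simp
  done

lemma col_VW: assumes im: "i < m" shows
  "(\<Sum>r\<in>Rs N m mt. l r * coef D a r (VW i)) = - (\<Sum>t<N. l (RBp t i)) + (\<Sum>t<N. l (RBm t i))"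
proof -
  let ?A = "(\<lambda>t. RBp t i) ` {..<N}" and ?B = "(\<lambda>t. RBm t i) ` {..<N}"
  have "(\<Sum>r\<in>Rs N m mt. l r * coef D a r (VW i)) = (\<Sum>r\<in>?A \<union> ?B. l r * coef D a r (VW i))"
    apply (rule sum_restrict[OF fin_R])
     apply (auto simp: im)[1]
    subgoal for r by (cases r) (auto simp: image_iff)
    done
  also have "\<dots> = (\<Sum>r\<in>?A. l r * coef D a r (VW i)) + (\<Sum>r\<in>?B. l r * coef D a r (VW i))"
    by (rule sum.union_disjoint) auto
  also have "(\<Sum>r\<in>?A. l r * coef D a r (VW i)) = - (\<Sum>t<N. l (RBp t i))"
    by (subst sum.reindex) (auto simp: inj_on_def sum_negf)
  also have "(\<Sum>r\<in>?B. l r * coef D a r (VW i)) = (\<Sum>t<N. l (RBm t i))"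
    by (subst sum.reindex) (auto simp: inj_on_def)
  finally show ?thesis .
qed

lemma col_VY: "t < N \<Longrightarrow> i < m \<Longrightarrow>
  (\<Sum>r\<in>Rs N m mt. l r * coef D a r (VY t i)) = - (\<Sum>j<mt t. l (RF t i j)) + l (RG i)"
  apply (subst sum_restrict[OF fin_R, where F="insert (RG i) ((\<lambda>j. RF t i j) ` {..<mt t})"])
    apply auto[1]
  subgoal for r by (cases r) auto
  apply (subst sum.insert)
    apply auto[2]
  apply (subst sum.reindex)
   apply (simp add: inj_on_def)
  apply (simp add: sum_negf)
  done

lemma col_VZ: "t < N \<Longrightarrow> j < mt t \<Longrightarrow>
  (\<Sum>r\<in>Rs N m mt. l r * coef D a r (VZ t j)) = - (\<Sum>i<m. l (RF t i j)) + l RH * a t j"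
  apply (subst sum_restrict[OF fin_R, where F="insert RH ((\<lambda>i. RF t i j) ` {..<m})"])
    apply auto[1]
  subgoal for r by (cases r) auto
  apply (subst sum.insert)
    apply auto[2]
  apply (subst sum.reindex)
   apply (simp add: inj_on_def)
  apply (simp add: sum_negf)
  done

lemma col_VS:
  "(\<Sum>r\<in>Rs N m mt. l r * coef D a r VS) = - (\<Sum>i<m. l (RG i)) + l RH"
  apply (subst sum_restrict[OF fin_R, where F="insert RH (RG ` {..<m})"])
    apply auto[1]
  subgoal for r by (cases r) auto
  apply (subst sum.insert)
    apply auto[2]
  apply (subst sum.reindex)
   apply (simp add: inj_on_def)
  apply (simp add: sum_negf)
  done

lemma col_rhs:
  "(\<Sum>r\<in>Rs N m mt. l r * rhs D a r) = (\<Sum>t<N. \<Sum>j<mt t. (l (RCp t j) - l (RCm t j)) * a t j)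
      + (\<Sum>t<N. \<Sum>i<m. \<Sum>j<mt t. l (RF t i j) * D t i j)"
proof -
  let ?A = "(\<lambda>(t,j). RCp t j) ` (SIGMA t:{..<N}. {..<mt t})"
  let ?B = "(\<lambda>(t,j). RCm t j) ` (SIGMA t:{..<N}. {..<mt t})"
  let ?C = "(\<lambda>(t,i,j). RF t i j) ` (SIGMA t:{..<N}. {..<m} \<times> {..<mt t})"
  let ?f = "\<lambda>r. l r * rhs D a r"
  have "(\<Sum>r\<in>Rs N m mt. ?f r) = (\<Sum>r\<in>(?A \<union> ?B) \<union> ?C. ?f r)"
    apply (rule sum_restrict[OF fin_R])
     apply auto[1]
    subgoal for r by (cases r) (auto simp: image_iff)
    done
  also have "\<dots> = ((\<Sum>r\<in>?A. ?f r) + (\<Sum>r\<in>?B. ?f r)) + (\<Sum>r\<in>?C. ?f r)"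
  proof -
    have "(\<Sum>r\<in>?A \<union> ?B. ?f r) = (\<Sum>r\<in>?A. ?f r) + (\<Sum>r\<in>?B. ?f r)"
      by (rule sum.union_disjoint) auto
    moreover have "(\<Sum>r\<in>(?A \<union> ?B) \<union> ?C. ?f r) = (\<Sum>r\<in>?A \<union> ?B. ?f r) + (\<Sum>r\<in>?C. ?f r)"
      by (rule sum.union_disjoint) auto
    ultimately show ?thesis by simp
  qed
  also have "(\<Sum>r\<in>?A. ?f r) = (\<Sum>t<N. \<Sum>j<mt t. l (RCp t j) * a t j)"
    by (subst sum.reindex) (auto simp: inj_on_def case_prod_beta sum2s[symmetric] intro!: sum.cong)
  also have "(\<Sum>r\<in>?B. ?f r) = - (\<Sum>t<N. \<Sum>j<mt t. l (RCm t j) * a t j)"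
    by (subst sum.reindex) (auto simp: inj_on_def case_prod_beta sum2s[symmetric] sum_negf intro!: sum.cong)
  also have "(\<Sum>r\<in>?C. ?f r) = (\<Sum>t<N. \<Sum>i<m. \<Sum>j<mt t. l (RF t i j) * D t i j)"
    by (subst sum.reindex) (auto simp: inj_on_def case_prod_beta sum3s[symmetric] intro!: sum.cong)
  finally show ?thesis by (simp add: left_diff_distrib sum_subtractf)
qed



lemma exists_kktD:
  fixes N m :: nat and mt :: "nat \<Rightarrow> nat"
    and D :: "nat \<Rightarrow> nat \<Rightarrow> nat \<Rightarrow> real" and a :: "nat \<Rightarrow> nat \<Rightarrow> real"
  assumes N: "1 \<le> N" and m: "1 \<le> m"
    and a0: "\<forall>t<N. \<forall>j<mt t. 0 \<le> a t j"
    and a1: "\<forall>t<N. (\<Sum>j<mt t. a t j) = 1"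
  shows "\<exists>u V y z lam Lam. KKT_D N m mt D a u V y z lam Lam"
proof -
  define g where "g r = (coef D a r, rhs D a r)" for r
  show ?thesis
  proof (cases "\<exists>x. \<forall>s\<in>g ` Rs N m mt. sat (Vs N m mt) x s")
    case True
    then obtain x where x: "\<forall>s\<in>g ` Rs N m mt. sat (Vs N m mt) x s" by blast
    have X: "(\<Sum>v\<in>Vs N m mt. coef D a r v * x v) \<le> rhs D a r" if "rvalid N m mt r" for r
      using x that by (auto simp: sat_def g_def)
    define Pi where "Pi t i j = x (VP t i j)" for t i j
    define w where "w i = x (VW i)" for i
    define y where "y t i = x (VY t i)" for t i
    define z where "z t j = x (VZ t j)" for t j
    show ?thesis
    proof (rule construct_kkt[OF N m a1, where Pi=Pi and w=w and y=y and z=z and s="x VS"])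
      show "\<forall>t<N. \<forall>i<m. \<forall>j<mt t. 0 \<le> Pi t i j"
        using X[of "RA _ _ _"] row_RA[where N=N and m=m and mt=mt and D=D and a=a and x=x] by (fastforce simp: Pi_def)
      show "\<forall>t<N. \<forall>i<m. (\<Sum>j<mt t. Pi t i j) = w i"
      proof (intro allI impI)
        fix t i assume "t < N" "i < m"
        then show "(\<Sum>j<mt t. Pi t i j) = w i"
          using X[of "RBp t i"] X[of "RBm t i"] row_RBp[where N=N and m=m and mt=mt and D=D and a=a and x=x] row_RBm[where N=N and m=m and mt=mt and D=D and a=a and x=x]
          by (force simp: Pi_def w_def)
      qed
      show "\<forall>t<N. \<forall>j<mt t. (\<Sum>i<m. Pi t i j) = a t j"
      proof (intro allI impI)
        fix t j assume "t < N" "j < mt t"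
        then show "(\<Sum>i<m. Pi t i j) = a t j"
          using X[of "RCp t j"] X[of "RCm t j"] row_RCp[where N=N and m=m and mt=mt and D=D and a=a and x=x] row_RCm[where N=N and m=m and mt=mt and D=D and a=a and x=x]
          by (force simp: Pi_def)
      qed
      show "\<forall>t<N. \<forall>i<m. \<forall>j<mt t. 0 \<le> D t i j + y t i + z t j"
      proof (intro allI impI)
        fix t i j assume "t < N" "i < m" "j < mt t"
        then show "0 \<le> D t i j + y t i + z t j"
          using X[of "RF t i j"] row_RF[where N=N and m=m and mt=mt and D=D and a=a and x=x] by (force simp: y_def z_def)
      qed
      show "\<forall>i<m. (\<Sum>t<N. y t i) \<le> x VS"
      proof (intro allI impI)
        fix i assume "i < m"
        then show "(\<Sum>t<N. y t i) \<le> x VS"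
          using X[of "RG i"] row_RG[where N=N and m=m and mt=mt and D=D and a=a and x=x] by (force simp: y_def)
      qed
      show "(\<Sum>t<N. \<Sum>i<m. \<Sum>j<mt t. D t i j * Pi t i j) + x VS + (\<Sum>t<N. \<Sum>j<mt t. z t j * a t j) \<le> 0"
        using X[of RH] row_RH[where N=N and m=m and mt=mt and D=D and a=a and x=x] by (simp add: Pi_def z_def mult.commute)
    qed
  next
    case False
    have finS: "finite (g ` Rs N m mt)" using fin_R by blast
    obtain p where p: "p \<in> cone (g ` Rs N m mt)" "\<forall>v\<in>Vs N m mt. fst p v = 0" "snd p < 0"
      using farkas[OF fin_V finS False] by blast
    obtain l where l: "\<forall>r\<in>Rs N m mt. 0 \<le> l r" "\<forall>u. fst p u = (\<Sum>r\<in>Rs N m mt. l r * fst (g r) u)"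
      "snd p = (\<Sum>r\<in>Rs N m mt. l r * snd (g r))"
      using cone_image_comb[OF fin_R p(1)] by blast
    have col: "(\<Sum>r\<in>Rs N m mt. l r * coef D a r v) = 0" if "vvalid N m mt v" for v
      using p(2) l(2) that by (auto simp: g_def)
    have rh: "(\<Sum>r\<in>Rs N m mt. l r * rhs D a r) < 0" using p(3) l(3) by (simp add: g_def)
    show ?thesis
    proof (rule FalseE, rule core_contra[OF N m a0 a1, where al="\<lambda>t i j. l (RA t i j)"
        and be="\<lambda>t i. l (RBp t i) - l (RBm t i)" and ga="\<lambda>t j. l (RCp t j) - l (RCm t j)"
        and Lm="\<lambda>t i j. l (RF t i j)" and la="\<lambda>i. l (RG i)" and th="l RH" and D=D])
      show "\<forall>t<N. \<forall>i<m. \<forall>j<mt t. 0 \<le> l (RA t i j)" using l(1) by auto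
      show "\<forall>t<N. \<forall>i<m. \<forall>j<mt t. 0 \<le> l (RF t i j)" using l(1) by auto
      show "\<forall>i<m. 0 \<le> l (RG i)" using l(1) by auto
      show "0 \<le> l RH" using l(1) by auto
      show "\<forall>t<N. \<forall>i<m. \<forall>j<mt t. l (RA t i j) = l (RBp t i) - l (RBm t i) + (l (RCp t j) - l (RCm t j)) + l RH * D t i j"
      proof (intro allI impI)
        fix t i j assume h: "t < N" "i < m" "j < mt t"
        from col[of "VP t i j"] col_VP[where N=N and m=m and mt=mt and D=D and a=a and l=l, OF h] h show "l (RA t i j) = l (RBp t i) - l (RBm t i) + (l (RCp t j) - l (RCm t j)) + l RH * D t i j"
          by simp
      qed
      show "\<forall>i<m. (\<Sum>t<N. l (RBp t i) - l (RBm t i)) = 0"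
      proof (intro allI impI)
        fix i assume h: "i < m"
        from col[of "VW i"] col_VW[where N=N and m=m and mt=mt and D=D and a=a and l=l, OF h] h show "(\<Sum>t<N. l (RBp t i) - l (RBm t i)) = 0"
          by (simp add: sum_subtractf)
      qed
      show "\<forall>t<N. \<forall>i<m. (\<Sum>j<mt t. l (RF t i j)) = l (RG i)"
      proof (intro allI impI)
        fix t i assume h: "t < N" "i < m"
        from col[of "VY t i"] col_VY[where N=N and m=m and mt=mt and D=D and a=a and l=l, OF h] h show "(\<Sum>j<mt t. l (RF t i j)) = l (RG i)"
          by simp
      qed
      show "\<forall>t<N. \<forall>j<mt t. (\<Sum>i<m. l (RF t i j)) = l RH * a t j"
      proof (intro allI impI)
        fix t j assume h: "t < N" "j < mt t"
        from col[of "VZ t j"] col_VZ[where N=N and m=m and mt=mt and D=D and a=a and l=l, OF h] h show "(\<Sum>i<m. l (RF t i j)) = l RH * a t j"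
          by simp
      qed
      show "(\<Sum>i<m. l (RG i)) = l RH"
        using col[of VS] col_VS[where N=N and m=m and mt=mt and D=D and a=a and l=l] by simp
      show "(\<Sum>t<N. \<Sum>j<mt t. (l (RCp t j) - l (RCm t j)) * a t j) + (\<Sum>t<N. \<Sum>i<m. \<Sum>j<mt t. l (RF t i j) * D t i j) < 0"
        using rh col_rhs[where N=N and m=m and mt=mt and D=D and a=a and l=l] by simp
    qed
  qed
qed

theorem proposition6:
  fixes N m :: nat and mt :: "nat \<Rightarrow> nat"
    and D :: "nat \<Rightarrow> nat \<Rightarrow> nat \<Rightarrow> real" and a :: "nat \<Rightarrow> nat \<Rightarrow> real"
  assumes "1 \<le> N" and "1 \<le> m" and "\<forall>t<N. 1 \<le> mt t"
    and "\<forall>t<N. \<forall>j<mt t. 0 \<le> a t j"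
    and "\<forall>t<N. (\<Sum>j<mt t. a t j) = 1"
  shows "((\<exists>w Pi. P_optimal N m mt D a w Pi) \<and> (\<exists>w Pi y z. KKT_P N m mt D a w Pi y z))
       \<and> ((\<exists>u V y z. D_optimal N m mt D a u V y z) \<and> (\<exists>u V y z lam Lam. KKT_D N m mt D a u V y z lam Lam))
       \<and> (\<forall>u V y z lam Lam. KKT_D N m mt D a u V y z lam Lam \<longrightarrow>
            D_optimal N m mt D a u V y z \<and> P_optimal N m mt D a lam Lam)"
proof -
  obtain u V y z lam Lam where K: "KKT_D N m mt D a u V y z lam Lam"
    using exists_kktD[OF assms(1,2,4,5)] by blast
  note O = kktD_optimal[OF assms(2) K]
  note P = kktD_to_P[OF assms(2) K]
  show ?thesis using K O P kktD_optimal[OF assms(2)] by blast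
qed

end
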